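(* Consider the multi-product personalized pricing model described in the context, fix a vector $f\in\mathbb{R}^n$ with all components positive, and suppose that Assumptions A0 and A1 hold. Let $q_{\min}:=\min_{i\in N,j\in M}\bar p_{ij}/f_i$ and $q_{\max}:=\max_{i\in N,j\in M}\bar p_{ij}/f_i$. Then $$\bar{\mathcal{R}}\le \beta\,\mathcal{R}^f,\qquad \beta:=1+\ln(q_{\max}/q_{\min}).$$ Moreover, the bound is tight: for every $\rho>1$ there is an instance satisfying the hypotheses with $q_{\max}/q_{\min}=\rho$ and $\bar{\mathcal{R}}=(1+\ln\rho)\,\mathcal{R}^f$.
   Context: A firm sells products $N=\{1,\dots,n\}$ to customer types $M=\{1,\dots,m\}$. For each $i\in N$, $j\in M$, $d_{ij}:\mathbb{R}^n_{\ge 0}\to\mathbb{R}_{\ge 0}$ is the (non-negative) demand for product $i$ by type $j$ at price vector $p=(p_1,\dots,p_n)$. The profit from type $j$ is $R_j(p)=\sum_{i\in N}p_i d_{ij}(p)$ and $\mathcal{R}^*_j:=\max_{p\ge 0}R_j(p)$. Type weights $\theta_j>0$ satisfy $\sum_j\theta_j=1$. The optimal personalized profit is $\bar{\mathcal{R}}:=\sum_{j\in M}\theta_j\mathcal{R}^*_j$; the aggregate profit is $R(p):=\sum_{j}\theta_jR_j(p)$. For a positive vector $f$, $\mathcal{R}^f:=\max_{q>0}R(qf)$ (optimal profit when pricing along $f$). Assumption A0: for each $j\in M$, $R_j$ attains its maximum over $p\ge0$ at a price vector $\bar p^j=(\bar p_{1j},\dots,\bar p_{nj})$ with all components positive and finite;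 such maximizers are fixed. Define $\delta_{ij}(q):=1$ if $q\le \bar p_{ij}/f_i$ and $\delta_{ij}(q):=0$ otherwise, and for $q\ge0$ $$G(q):=\sum_{j\in M}\theta_j\sum_{i\in N}f_i d_{ij}(\bar p^j)\delta_{ij}(q),\qquad H(q):=\sum_{j\in M}\theta_j\sum_{i\in N}f_i d_{ij}(qf).$$ Assumption A1: $G(q)\le H(q)$ for all $q\ge 0$. (For the tightness claim, the paper's extremal instance has a single product, $f=e$, and a continuum of customer types with willingness to pay in $[1,\rho]$; the model is understood to allow such a continuum of types with sums over types replaced by integrals.) *)

theory Defs
  imports "HOL-Probability.Probability"
begin

definition nonneg_vec :: "('n \<Rightarrow> real) \<Rightarrow> bool" where
  "nonneg_vec p \<longleftrightarrow> (\<forall>i. 0 \<le> p i)"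

text \<open>d i j p : demand for product i by type j at price vector p.\<close>
definition profit :: "('n::finite \<Rightarrow> 'm \<Rightarrow> ('n \<Rightarrow> real) \<Rightarrow> real) \<Rightarrow> 'm \<Rightarrow> ('n \<Rightarrow> real) \<Rightarrow> real" where
  "profit d j p = (\<Sum>i\<in>UNIV. p i * d i j p)"

definition opt_profit :: "('n::finite \<Rightarrow> 'm \<Rightarrow> ('n \<Rightarrow> real) \<Rightarrow> real) \<Rightarrow> 'm \<Rightarrow> real" where
  "opt_profit d j = Sup (profit d j ` {p. nonneg_vec p})"

definition scal_vec :: "real \<Rightarrow> ('n \<Rightarrow> real) \<Rightarrow> ('n \<Rightarrow> real)" where
  "scal_vec q f = (\<lambda>i. q * f i)"

definition delta :: "('m \<Rightarrow> 'n \<Rightarrow> real) \<Rightarrow> ('n \<Rightarrow> real) \<Rightarrow> 'n \<Rightarrow> 'm \<Rightarrow> real \<Rightarrow> real" where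
  "delta pbar f i j q = (if q \<le> pbar j i / f i then 1 else 0)"

definition demand_nonneg :: "('n \<Rightarrow> 'm \<Rightarrow> ('n \<Rightarrow> real) \<Rightarrow> real) \<Rightarrow> bool" where
  "demand_nonneg d \<longleftrightarrow> (\<forall>i j p. nonneg_vec p \<longrightarrow> 0 \<le> d i j p)"

definition agg_profit :: "('m::finite \<Rightarrow> real) \<Rightarrow> ('n::finite \<Rightarrow> 'm \<Rightarrow> ('n \<Rightarrow> real) \<Rightarrow> real) \<Rightarrow> ('n \<Rightarrow> real) \<Rightarrow> real" where
  "agg_profit \<theta> d p = (\<Sum>j\<in>UNIV. \<theta> j * profit d j p)"

definition pers_profit :: "('m::finite \<Rightarrow> real) \<Rightarrow> ('n::finite \<Rightarrow> 'm \<Rightarrow> ('n \<Rightarrow> real) \<Rightarrow> real) \<Rightarrow> real" where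
  "pers_profit \<theta> d = (\<Sum>j\<in>UNIV. \<theta> j * opt_profit d j)"

definition f_profit :: "('m::finite \<Rightarrow> real) \<Rightarrow> ('n::finite \<Rightarrow> 'm \<Rightarrow> ('n \<Rightarrow> real) \<Rightarrow> real) \<Rightarrow> ('n \<Rightarrow> real) \<Rightarrow> real" where
  "f_profit \<theta> d f = Sup ((\<lambda>q. agg_profit \<theta> d (scal_vec q f)) ` {q. 0 < q})"

definition Gfun :: "('m::finite \<Rightarrow> real) \<Rightarrow> ('n::finite \<Rightarrow> 'm \<Rightarrow> ('n \<Rightarrow> real) \<Rightarrow> real) \<Rightarrow> ('m \<Rightarrow> 'n \<Rightarrow> real) \<Rightarrow> ('n \<Rightarrow> real) \<Rightarrow> real \<Rightarrow> real" where
  "Gfun \<theta> d pbar f q = (\<Sum>j\<in>UNIV. \<theta> j * (\<Sum>i\<in>UNIV. f i * d i j (pbar j) * delta pbar f i j q))"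

definition Hfun :: "('m::finite \<Rightarrow> real) \<Rightarrow> ('n::finite \<Rightarrow> 'm \<Rightarrow> ('n \<Rightarrow> real) \<Rightarrow> real) \<Rightarrow> ('n \<Rightarrow> real) \<Rightarrow> real \<Rightarrow> real" where
  "Hfun \<theta> d f q = (\<Sum>j\<in>UNIV. \<theta> j * (\<Sum>i\<in>UNIV. f i * d i j (scal_vec q f)))"

definition A0 :: "('n::finite \<Rightarrow> 'm \<Rightarrow> ('n \<Rightarrow> real) \<Rightarrow> real) \<Rightarrow> ('m \<Rightarrow> 'n \<Rightarrow> real) \<Rightarrow> bool" where
  "A0 d pbar \<longleftrightarrow> (\<forall>j. (\<forall>i. 0 < pbar j i) \<and> (\<forall>p. nonneg_vec p \<longrightarrow> profit d j p \<le> profit d j (pbar j)))"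

definition A1 :: "('m::finite \<Rightarrow> real) \<Rightarrow> ('n::finite \<Rightarrow> 'm \<Rightarrow> ('n \<Rightarrow> real) \<Rightarrow> real) \<Rightarrow> ('m \<Rightarrow> 'n \<Rightarrow> real) \<Rightarrow> ('n \<Rightarrow> real) \<Rightarrow> bool" where
  "A1 \<theta> d pbar f \<longleftrightarrow> (\<forall>q. 0 \<le> q \<longrightarrow> Gfun \<theta> d pbar f q \<le> Hfun \<theta> d f q)"

definition qmin :: "('m::finite \<Rightarrow> 'n::finite \<Rightarrow> real) \<Rightarrow> ('n \<Rightarrow> real) \<Rightarrow> real" where
  "qmin pbar f = Min ((\<lambda>(i, j). pbar j i / f i) ` UNIV)"

definition qmax :: "('m::finite \<Rightarrow> 'n::finite \<Rightarrow> real) \<Rightarrow> ('n \<Rightarrow> real) \<Rightarrow> real" where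
  "qmax pbar f = Max ((\<lambda>(i, j). pbar j i / f i) ` UNIV)"

section \<open>Continuum of customer types: type distribution is a probability measure Theta,
  sums over types replaced by (Bochner) integrals\<close>

definition c_demand_nonneg :: "'m measure \<Rightarrow> ('n \<Rightarrow> 'm \<Rightarrow> ('n \<Rightarrow> real) \<Rightarrow> real) \<Rightarrow> bool" where
  "c_demand_nonneg \<Theta> d \<longleftrightarrow> (\<forall>i. \<forall>j\<in>space \<Theta>. \<forall>p. nonneg_vec p \<longrightarrow> 0 \<le> d i j p)"

definition c_agg_profit :: "'m measure \<Rightarrow> ('n::finite \<Rightarrow> 'm \<Rightarrow> ('n \<Rightarrow> real) \<Rightarrow> real) \<Rightarrow> ('n \<Rightarrow> real) \<Rightarrow> real" where
  "c_agg_profit \<Theta> d p = (\<integral>j. profit d j p \<partial>\<Theta>)"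

definition c_pers_profit :: "'m measure \<Rightarrow> ('n::finite \<Rightarrow> 'm \<Rightarrow> ('n \<Rightarrow> real) \<Rightarrow> real) \<Rightarrow> real" where
  "c_pers_profit \<Theta> d = (\<integral>j. opt_profit d j \<partial>\<Theta>)"

definition c_f_profit :: "'m measure \<Rightarrow> ('n::finite \<Rightarrow> 'm \<Rightarrow> ('n \<Rightarrow> real) \<Rightarrow> real) \<Rightarrow> ('n \<Rightarrow> real) \<Rightarrow> real" where
  "c_f_profit \<Theta> d f = Sup ((\<lambda>q. c_agg_profit \<Theta> d (scal_vec q f)) ` {q. 0 < q})"

definition G_integrand :: "('n::finite \<Rightarrow> 'm \<Rightarrow> ('n \<Rightarrow> real) \<Rightarrow> real) \<Rightarrow> ('m \<Rightarrow> 'n \<Rightarrow> real) \<Rightarrow> ('n \<Rightarrow> real) \<Rightarrow> real \<Rightarrow> 'm \<Rightarrow> real" where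
  "G_integrand d pbar f q j = (\<Sum>i\<in>UNIV. f i * d i j (pbar j) * delta pbar f i j q)"

definition H_integrand :: "('n::finite \<Rightarrow> 'm \<Rightarrow> ('n \<Rightarrow> real) \<Rightarrow> real) \<Rightarrow> ('n \<Rightarrow> real) \<Rightarrow> real \<Rightarrow> 'm \<Rightarrow> real" where
  "H_integrand d f q j = (\<Sum>i\<in>UNIV. f i * d i j (scal_vec q f))"

definition c_Gfun :: "'m measure \<Rightarrow> ('n::finite \<Rightarrow> 'm \<Rightarrow> ('n \<Rightarrow> real) \<Rightarrow> real) \<Rightarrow> ('m \<Rightarrow> 'n \<Rightarrow> real) \<Rightarrow> ('n \<Rightarrow> real) \<Rightarrow> real \<Rightarrow> real" where
  "c_Gfun \<Theta> d pbar f q = (\<integral>j. G_integrand d pbar f q j \<partial>\<Theta>)"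

definition c_Hfun :: "'m measure \<Rightarrow> ('n::finite \<Rightarrow> 'm \<Rightarrow> ('n \<Rightarrow> real) \<Rightarrow> real) \<Rightarrow> ('n \<Rightarrow> real) \<Rightarrow> real \<Rightarrow> real" where
  "c_Hfun \<Theta> d f q = (\<integral>j. H_integrand d f q j \<partial>\<Theta>)"

definition c_integrable :: "'m measure \<Rightarrow> ('n::finite \<Rightarrow> 'm \<Rightarrow> ('n \<Rightarrow> real) \<Rightarrow> real) \<Rightarrow> ('m \<Rightarrow> 'n \<Rightarrow> real) \<Rightarrow> ('n \<Rightarrow> real) \<Rightarrow> bool" where
  "c_integrable \<Theta> d pbar f \<longleftrightarrow>
     (\<forall>p. nonneg_vec p \<longrightarrow> integrable \<Theta> (\<lambda>j. profit d j p)) \<and>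
     integrable \<Theta> (\<lambda>j. opt_profit d j) \<and>
     (\<forall>q. 0 \<le> q \<longrightarrow> integrable \<Theta> (G_integrand d pbar f q) \<and> integrable \<Theta> (H_integrand d f q))"

definition c_A0 :: "'m measure \<Rightarrow> ('n::finite \<Rightarrow> 'm \<Rightarrow> ('n \<Rightarrow> real) \<Rightarrow> real) \<Rightarrow> ('m \<Rightarrow> 'n \<Rightarrow> real) \<Rightarrow> bool" where
  "c_A0 \<Theta> d pbar \<longleftrightarrow> (\<forall>j\<in>space \<Theta>. (\<forall>i. 0 < pbar j i) \<and>
       (\<forall>p. nonneg_vec p \<longrightarrow> profit d j p \<le> profit d j (pbar j)))"

definition c_A1 :: "'m measure \<Rightarrow> ('n::finite \<Rightarrow> 'm \<Rightarrow> ('n \<Rightarrow> real) \<Rightarrow> real) \<Rightarrow> ('m \<Rightarrow> 'n \<Rightarrow> real) \<Rightarrow> ('n \<Rightarrow> real) \<Rightarrow> bool" where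
  "c_A1 \<Theta> d pbar f \<longleftrightarrow> (\<forall>q. 0 \<le> q \<longrightarrow> c_Gfun \<Theta> d pbar f q \<le> c_Hfun \<Theta> d f q)"

definition c_qmin :: "'m measure \<Rightarrow> ('m \<Rightarrow> 'n \<Rightarrow> real) \<Rightarrow> ('n \<Rightarrow> real) \<Rightarrow> real" where
  "c_qmin \<Theta> pbar f = (INF ij \<in> UNIV \<times> space \<Theta>. pbar (snd ij) (fst ij) / f (fst ij))"

definition c_qmax :: "'m measure \<Rightarrow> ('m \<Rightarrow> 'n \<Rightarrow> real) \<Rightarrow> ('n \<Rightarrow> real) \<Rightarrow> real" where
  "c_qmax \<Theta> pbar f = (SUP ij \<in> UNIV \<times> space \<Theta>. pbar (snd ij) (fst ij) / f (fst ij))"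

end

theory Submission
  imports Defs
begin

lemma aux_induct:
  fixes c v :: "'a \<Rightarrow> real"
  shows "finite S \<Longrightarrow> (\<forall>s\<in>S. 0 \<le> c s) \<Longrightarrow> (\<forall>s\<in>S. m \<le> v s \<and> v s \<le> M) \<Longrightarrow> 0 < m \<Longrightarrow> m \<le> M
    \<Longrightarrow> (\<forall>q>0. q * (\<Sum>s\<in>{s\<in>S. q \<le> v s}. c s) \<le> B)
    \<Longrightarrow> (\<Sum>s\<in>S. c s * (v s - m)) \<le> B * ln (M / m)"
proof (induction "card S" arbitrary: S m rule: less_induct)
  case less
  have B0: "0 \<le> B"
  proof -
    have "1 * (\<Sum>s\<in>{s\<in>S. 1 \<le> v s}. c s) \<le> B" using less.prems(6) by (metis zero_less_one)
    moreover have "0 \<le> (\<Sum>s\<in>{s\<in>S. 1 \<le> v s}. c s)" using less.prems(2) by (intro sum_nonneg) auto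
    ultimately show ?thesis by linarith
  qed
  show ?case
  proof (cases "S = {}")
    case True
    have "0 \<le> ln (M/m)" using less.prems by simp
    then show ?thesis using True B0 by simp
  next
    case False
    define a where "a = Min (v ` S)"
    have aS: "a \<in> v ` S" unfolding a_def using False less.prems(1) by simp
    have amin: "\<forall>s\<in>S. a \<le> v s" unfolding a_def using less.prems(1) by simp
    have ma: "m \<le> a" and aM: "a \<le> M" using aS less.prems(3) by auto
    have a0: "0 < a" using ma less.prems(4) by linarith
    define S' where "S' = {s\<in>S. a < v s}"
    have S'sub: "S' \<subset> S" using aS unfolding S'_def by auto
    have cardlt: "card S' < card S" using S'sub less.prems(1) by (simp add: psubset_card_mono)
    have finS': "finite S'" using S'sub less.prems(1) finite_subset by blast
    have hypS': "\<forall>q>0. q * (\<Sum>s\<in>{s\<in>S'. q \<le> v s}. c s) \<le> B"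
    proof (intro allI impI)
      fix q :: real assume q: "q > 0"
      have "(\<Sum>s\<in>{s\<in>S'. q \<le> v s}. c s) \<le> (\<Sum>s\<in>{s\<in>S. q \<le> v s}. c s)"
        using less.prems(1,2) unfolding S'_def by (intro sum_mono2) auto
      then have "q * (\<Sum>s\<in>{s\<in>S'. q \<le> v s}. c s) \<le> q * (\<Sum>s\<in>{s\<in>S. q \<le> v s}. c s)"
        using q by (simp add: mult_left_mono)
      also have "\<dots> \<le> B" using less.prems(6) q by auto
      finally show "q * (\<Sum>s\<in>{s\<in>S'. q \<le> v s}. c s) \<le> B" .
    qed
    have IH: "(\<Sum>s\<in>S'. c s * (v s - a)) \<le> B * ln (M / a)"
      using less.hyps[OF cardlt finS' _ _ a0 aM hypS'] less.prems(2,3) S'sub unfolding S'_def by auto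
    have split: "(\<Sum>s\<in>S. c s * (v s - m)) = (a - m) * (\<Sum>s\<in>S. c s) + (\<Sum>s\<in>S. c s * (v s - a))"
      by (simp add: sum_distrib_left sum.distrib[symmetric] algebra_simps)
    have sp2: "(\<Sum>s\<in>S. c s * (v s - a)) = (\<Sum>s\<in>S'. c s * (v s - a))"
    proof -
      have "(\<Sum>s\<in>S. c s * (v s - a)) = (\<Sum>s\<in>S'. c s * (v s - a)) + (\<Sum>s\<in>S - S'. c s * (v s - a))"
        using less.prems(1) S'sub by (metis (no_types, lifting) psubset_imp_subset sum.subset_diff add.commute)
      moreover have "(\<Sum>s\<in>S - S'. c s * (v s - a)) = 0"
        using amin unfolding S'_def by (intro sum.neutral) force
      ultimately show ?thesis by simp
    qed
    have aSum: "a * (\<Sum>s\<in>S. c s) \<le> B"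
    proof -
      have "{s\<in>S. a \<le> v s} = S" using amin by auto
      then show ?thesis using less.prems(6) a0 by metis
    qed
    have lnb: "(a - m) / a \<le> ln (a / m)"
    proof -
      have "ln (m / a) \<le> m / a - 1" using less.prems(4) a0 by (intro ln_le_minus_one) simp
      moreover have "ln (a/m) = - ln (m/a)" using less.prems(4) a0 by (simp add: ln_div)
      moreover have "(a - m)/a = 1 - m/a" using a0 by (simp add: field_simps)
      ultimately show ?thesis by linarith
    qed
    have t1: "(a - m) * (\<Sum>s\<in>S. c s) \<le> B * ln (a / m)"
    proof -
      have "(a - m) * (\<Sum>s\<in>S. c s) = (a - m) / a * (a * (\<Sum>s\<in>S. c s))" using a0 by simp
      also have "\<dots> \<le> (a - m) / a * B" using ma a0 aSum by (intro mult_left_mono) auto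
      also have "\<dots> \<le> ln (a/m) * B" using lnb B0 by (intro mult_right_mono) auto
      finally show ?thesis by (simp add: mult.commute)
    qed
    have lnsum: "ln (a/m) + ln (M/a) = ln (M/m)"
      using a0 less.prems(4) aM by (simp add: ln_div)
    have "(\<Sum>s\<in>S. c s * (v s - m)) \<le> B * ln (a / m) + B * ln (M / a)"
      using split sp2 t1 IH by linarith
    also have "\<dots> = B * ln (M/m)" using lnsum by (simp add: distrib_left[symmetric])
    finally show ?thesis .
  qed
qed

lemma main_discrete:
  fixes c v :: "'a \<Rightarrow> real"
  assumes fin: "finite S" and ne: "S \<noteq> {}" and c0: "\<forall>s\<in>S. 0 \<le> c s" and v0: "\<forall>s\<in>S. 0 < v s"
    and hyp: "\<forall>q>0. q * (\<Sum>s\<in>{s\<in>S. q \<le> v s}. c s) \<le> B"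
  shows "(\<Sum>s\<in>S. c s * v s) \<le> (1 + ln (Max (v ` S) / Min (v ` S))) * B"
proof -
  define a where "a = Min (v ` S)"
  define M where "M = Max (v ` S)"
  have aS: "a \<in> v ` S" unfolding a_def using fin ne by simp
  have amin: "\<forall>s\<in>S. a \<le> v s" unfolding a_def using fin by simp
  have Mmax: "\<forall>s\<in>S. v s \<le> M" unfolding M_def using fin by simp
  have a0: "0 < a" using aS v0 by auto
  have aM: "a \<le> M" using aS Mmax by auto
  have 1: "(\<Sum>s\<in>S. c s * (v s - a)) \<le> B * ln (M / a)"
    using aux_induct[OF fin c0 _ a0 aM hyp] amin Mmax by auto
  have 2: "a * (\<Sum>s\<in>S. c s) \<le> B"
  proof -
    have "{s\<in>S. a \<le> v s} = S" using amin by auto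
    then show ?thesis using hyp a0 by metis
  qed
  have "(\<Sum>s\<in>S. c s * v s) = (\<Sum>s\<in>S. c s * (v s - a)) + a * (\<Sum>s\<in>S. c s)"
    by (simp add: sum_distrib_left sum.distrib[symmetric] algebra_simps)
  also have "\<dots> \<le> B * ln (M / a) + B" using 1 2 by linarith
  finally show ?thesis unfolding M_def a_def by (simp add: algebra_simps)
qed

lemma part1:
  fixes \<theta> :: "'m::finite \<Rightarrow> real" and d :: "'n::finite \<Rightarrow> 'm \<Rightarrow> ('n \<Rightarrow> real) \<Rightarrow> real"
    and pbar :: "'m \<Rightarrow> 'n \<Rightarrow> real" and f :: "'n \<Rightarrow> real"
  assumes th: "\<forall>j. 0 < \<theta> j" and f0: "\<forall>i. 0 < f i" and dn: "demand_nonneg d"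
    and a0: "A0 d pbar" and a1: "A1 \<theta> d pbar f"
  shows "pers_profit \<theta> d \<le> (1 + ln (qmax pbar f / qmin pbar f)) * f_profit \<theta> d f"
proof -
  have pbnn: "nonneg_vec (pbar j)" for j using a0 unfolding A0_def nonneg_vec_def by (simp add: less_imp_le)
  have opt: "opt_profit d j = profit d j (pbar j)" for j
    unfolding opt_profit_def
    by (rule cSup_eq_maximum) (use pbnn a0 in \<open>auto simp: A0_def\<close>)
  have bdd: "bdd_above ((\<lambda>q. agg_profit \<theta> d (scal_vec q f)) ` {q. 0 < q})"
  proof (rule bdd_aboveI2)
    fix q :: real assume "q \<in> {q. 0 < q}"
    then have "nonneg_vec (scal_vec q f)" using f0 by (auto simp: nonneg_vec_def scal_vec_def less_imp_le)
    then have "profit d j (scal_vec q f) \<le> profit d j (pbar j)" for j using a0 by (auto simp: A0_def)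
    then show "agg_profit \<theta> d (scal_vec q f) \<le> (\<Sum>j\<in>UNIV. \<theta> j * profit d j (pbar j))"
      unfolding agg_profit_def using th by (intro sum_mono mult_left_mono) (auto simp: less_imp_le)
  qed
  have agg_le: "agg_profit \<theta> d (scal_vec q f) \<le> f_profit \<theta> d f" if "q > 0" for q
    unfolding f_profit_def by (rule cSup_upper) (use that bdd in auto)
  have aggH: "agg_profit \<theta> d (scal_vec q f) = q * Hfun \<theta> d f q" for q
    unfolding agg_profit_def Hfun_def profit_def
    by (simp add: sum_distrib_left scal_vec_def algebra_simps)
  define v where "v = (\<lambda>(i::'n, j::'m). pbar j i / f i)"
  define c where "c = (\<lambda>(i::'n, j::'m). \<theta> j * (f i * d i j (pbar j)))"
  have G_eq: "Gfun \<theta> d pbar f q = (\<Sum>s\<in>{s\<in>UNIV. q \<le> v s}. c s)" for q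
  proof -
    have "Gfun \<theta> d pbar f q = (\<Sum>j\<in>UNIV. \<Sum>i\<in>UNIV. c (i,j) * (if q \<le> v (i,j) then 1 else 0))"
      unfolding Gfun_def c_def v_def delta_def by (simp add: sum_distrib_left algebra_simps)
    also have "\<dots> = (\<Sum>i\<in>UNIV. \<Sum>j\<in>UNIV. c (i,j) * (if q \<le> v (i,j) then 1 else 0))"
      by (rule sum.swap)
    also have "\<dots> = (\<Sum>s\<in>UNIV. c s * (if q \<le> v s then 1 else 0))"
      by (simp add: sum.cartesian_product)
    also have "\<dots> = (\<Sum>s\<in>{s\<in>UNIV. q \<le> v s}. c s)"
      by (simp add: sum.inter_filter[symmetric] if_distrib cong: if_cong)
    finally show ?thesis .
  qed
  have pers_eq: "pers_profit \<theta> d = (\<Sum>s\<in>UNIV. c s * v s)"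
  proof -
    have "pers_profit \<theta> d = (\<Sum>j\<in>UNIV. \<Sum>i\<in>UNIV. c (i,j) * v (i,j))"
      unfolding pers_profit_def opt profit_def c_def v_def using f0
      by (simp add: sum_distrib_left field_simps less_imp_neq[symmetric])
    also have "\<dots> = (\<Sum>i\<in>UNIV. \<Sum>j\<in>UNIV. c (i,j) * v (i,j))" by (rule sum.swap)
    also have "\<dots> = (\<Sum>s\<in>UNIV. c s * v s)" by (simp add: sum.cartesian_product)
    finally show ?thesis .
  qed
  have hyp: "\<forall>q>0. q * (\<Sum>s\<in>{s\<in>UNIV. q \<le> v s}. c s) \<le> f_profit \<theta> d f"
  proof (intro allI impI)
    fix q :: real assume q: "q > 0"
    have "Gfun \<theta> d pbar f q \<le> Hfun \<theta> d f q" using a1 q unfolding A1_def by auto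
    then have "q * Gfun \<theta> d pbar f q \<le> q * Hfun \<theta> d f q" using q by (simp add: mult_left_mono)
    then show "q * (\<Sum>s\<in>{s\<in>UNIV. q \<le> v s}. c s) \<le> f_profit \<theta> d f"
      using agg_le[OF q] aggH[of q] G_eq[of q] by (metis order_trans)
  qed
  have c0: "\<forall>s\<in>UNIV. 0 \<le> c s" using th f0 dn pbnn unfolding c_def demand_nonneg_def
    by (auto intro!: mult_nonneg_nonneg simp: less_imp_le)
  have v0: "\<forall>s\<in>UNIV. 0 < v s" using a0 f0 unfolding v_def A0_def by auto
  have "(\<Sum>s\<in>UNIV. c s * v s) \<le> (1 + ln (Max (v ` UNIV) / Min (v ` UNIV))) * f_profit \<theta> d f"
    by (rule main_discrete[OF finite UNIV_not_empty c0 v0 hyp])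
  then show ?thesis unfolding pers_eq qmax_def qmin_def v_def .
qed

lemma part2:
  fixes \<rho> :: real
  assumes r1: "1 < \<rho>"
  shows "\<exists>(\<Theta> :: real measure) (d :: unit \<Rightarrow> real \<Rightarrow> (unit \<Rightarrow> real) \<Rightarrow> real)
               (pbar :: real \<Rightarrow> unit \<Rightarrow> real) (f :: unit \<Rightarrow> real).
               prob_space \<Theta> \<and> (\<forall>i. 0 < f i) \<and> c_demand_nonneg \<Theta> d \<and>
               c_integrable \<Theta> d pbar f \<and> c_A0 \<Theta> d pbar \<and> c_A1 \<Theta> d pbar f \<and>
               c_qmax \<Theta> pbar f / c_qmin \<Theta> pbar f = \<rho> \<and>
               0 < c_f_profit \<Theta> d f \<and>
               c_pers_profit \<Theta> d = (1 + ln \<rho>) * c_f_profit \<Theta> d f"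
proof -
  define g :: "real \<Rightarrow> real" where "g j = 1 / max (1/\<rho>) j" for j
  define \<Theta> where "\<Theta> = lebesgue_on {0..1::real}"
  define d :: "unit \<Rightarrow> real \<Rightarrow> (unit \<Rightarrow> real) \<Rightarrow> real" where
    "d i j p = (if p i \<le> g j then 1 else 0)" for i j p
  define pbar :: "real \<Rightarrow> unit \<Rightarrow> real" where "pbar j i = g j" for j i
  define f :: "unit \<Rightarrow> real" where "f i = 1" for i
  have r0: "0 < \<rho>" using r1 by simp
  have mpos: "0 < max (1/\<rho>) j" for j
  proof -
    have "0 < 1/\<rho>" using r0 by simp
    then show "0 < max (1/\<rho>) j" by (simp add: less_max_iff_disj)
  qed
  have g0: "0 < g j" for j using mpos[of j] unfolding g_def by simp
  have gle: "g j \<le> \<rho>" for j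
  proof -
    have "1/\<rho> \<le> max (1/\<rho>) j" by simp
    then have "1 / max (1/\<rho>) j \<le> 1 / (1/\<rho>)" using r0 mpos[of j] by (intro divide_left_mono) auto
    then show ?thesis unfolding g_def using r0 by simp
  qed
  have gge: "1 \<le> g j" if "j \<le> 1" for j
  proof -
    have "max (1/\<rho>) j \<le> 1" using that r1 by simp
    then show ?thesis unfolding g_def using mpos[of j] by simp
  qed
  have gcont: "continuous_on {0..1} g" unfolding g_def using r0
    by (intro continuous_intros) (auto simp: max_def)
  have sp: "space \<Theta> = {0..1}" unfolding \<Theta>_def by simp
  have prob: "prob_space \<Theta>" unfolding \<Theta>_def
    by (rule prob_space_restrict_space) auto
  interpret P: prob_space \<Theta> by (rule prob)
  have gmeas: "g \<in> borel_measurable \<Theta>" unfolding \<Theta>_def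
    by (rule continuous_imp_measurable_on_sets_lebesgue[OF gcont]) auto
  have indmeas: "(\<lambda>j. if t \<le> g j then 1 else 0 :: real) \<in> borel_measurable \<Theta>" for t
    using gmeas by measurable
  have profit_eq: "profit d j p = p () * (if p () \<le> g j then 1 else 0)" for j p
    unfolding profit_def d_def by (simp add: UNIV_unit)
  have opt_eq: "opt_profit d j = g j" for j
    unfolding opt_profit_def
  proof (rule cSup_eq_maximum)
    show "g j \<in> profit d j ` {p. nonneg_vec p}"
      using g0[of j] by (intro image_eqI[where x="\<lambda>_. g j"]) (auto simp: profit_eq nonneg_vec_def less_imp_le)
    show "\<And>x. x \<in> profit d j ` {p. nonneg_vec p} \<Longrightarrow> x \<le> g j"
      using g0[of j] by (auto simp: profit_eq less_imp_le)
  qed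
  have opt_fun: "opt_profit d = g" by (rule ext) (rule opt_eq)
  have GI: "G_integrand d pbar f q j = (if q \<le> g j then 1 else 0)" for q j
    unfolding G_integrand_def d_def pbar_def f_def delta_def by simp
  have HI: "H_integrand d f q j = (if q \<le> g j then 1 else 0)" for q j
    unfolding H_integrand_def d_def scal_vec_def f_def by simp
  have int_ind: "integrable \<Theta> (\<lambda>j. if t \<le> g j then 1 else 0 :: real)" for t
    by (rule P.integrable_const_bound[where B=1]) (auto intro: indmeas)
  have int_g: "integrable \<Theta> g"
    by (rule P.integrable_const_bound[where B=\<rho>]) (use gmeas gle g0 in \<open>auto intro!: AE_I2 simp: abs_of_pos\<close>)
  have integ: "c_integrable \<Theta> d pbar f"
    unfolding c_integrable_def
  proof (intro conjI allI impI)
    fix p :: "unit \<Rightarrow> real"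
    show "integrable \<Theta> (\<lambda>j. profit d j p)"
      unfolding profit_eq using int_ind[of "p ()"] by simp
  next
    show "integrable \<Theta> (opt_profit d)" using int_g by (simp add: opt_fun)
  next
    fix q :: real
    show "integrable \<Theta> (G_integrand d pbar f q)" using int_ind[of q] by (simp add: GI[abs_def])
    show "integrable \<Theta> (H_integrand d f q)" using int_ind[of q] by (simp add: HI[abs_def])
  qed
  have dn: "c_demand_nonneg \<Theta> d" unfolding c_demand_nonneg_def d_def by simp
  have A0: "c_A0 \<Theta> d pbar" unfolding c_A0_def
  proof (intro ballI allI impI conjI)
    fix j i show "0 < pbar j i" unfolding pbar_def by (rule g0)
  next
    fix j and p :: "unit \<Rightarrow> real" assume "nonneg_vec p"
    show "profit d j p \<le> profit d j (pbar j)"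
      using g0[of j] by (auto simp: profit_eq pbar_def less_imp_le)
  qed
  have A1: "c_A1 \<Theta> d pbar f" unfolding c_A1_def c_Gfun_def c_Hfun_def by (simp add: GI[abs_def] HI[abs_def])
  have qmax: "c_qmax \<Theta> pbar f = \<rho>" unfolding c_qmax_def sp
  proof (rule cSup_eq_maximum)
    show "\<rho> \<in> (\<lambda>x. pbar (snd x) (fst x) / f (fst x)) ` (UNIV \<times> {0..1})"
      using r0 by (intro image_eqI[where x="((),0)"]) (auto simp: pbar_def f_def g_def max_def)
    show "\<And>x. x \<in> (\<lambda>x. pbar (snd x) (fst x) / f (fst x)) ` (UNIV \<times> {0..1}) \<Longrightarrow> x \<le> \<rho>"
      by (auto simp: pbar_def f_def gle)
  qed
  have qmin: "c_qmin \<Theta> pbar f = 1" unfolding c_qmin_def sp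
  proof (rule cInf_eq_minimum)
    show "1 \<in> (\<lambda>x. pbar (snd x) (fst x) / f (fst x)) ` (UNIV \<times> {0..1})"
      using r1 by (intro image_eqI[where x="((),1)"]) (auto simp: pbar_def f_def g_def)
    show "\<And>x. x \<in> (\<lambda>x. pbar (snd x) (fst x) / f (fst x)) ` (UNIV \<times> {0..1}) \<Longrightarrow> 1 \<le> x"
      by (auto simp: pbar_def f_def gge)
  qed
  have agg: "c_agg_profit \<Theta> d (scal_vec q f) = (\<integral>j. q * (if q \<le> g j then 1 else 0) \<partial>\<Theta>)" for q
    unfolding c_agg_profit_def profit_eq by (simp add: scal_vec_def f_def)
  have agg1: "c_agg_profit \<Theta> d (scal_vec 1 f) = 1"
  proof -
    have "(\<integral>j. 1 * (if 1 \<le> g j then 1 else 0) \<partial>\<Theta>) = (\<integral>j. (1::real) \<partial>\<Theta>)"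
      by (rule Bochner_Integration.integral_cong) (auto simp: sp gge)
    then show ?thesis using agg[of 1] P.prob_space by simp
  qed
  have aggle: "c_agg_profit \<Theta> d (scal_vec q f) \<le> 1" if q0: "0 < q" for q
  proof (cases "q \<le> 1")
    case True
    have "(\<integral>j. q * (if q \<le> g j then 1 else 0) \<partial>\<Theta>) \<le> (\<integral>j. (1::real) \<partial>\<Theta>)"
      using int_ind[of q] True q0 by (intro integral_mono) auto
    then show ?thesis using agg[of q] P.prob_space by simp
  next
    case False
    have "(\<integral>j. q * (if q \<le> g j then 1 else 0) \<partial>\<Theta>) \<le> (\<integral>j. q * indicator {0..1/q} j \<partial>\<Theta>)"
    proof (rule integral_mono)
      show "integrable \<Theta> (\<lambda>j. q * (if q \<le> g j then 1 else 0))" using int_ind[of q] by simp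
      show "integrable \<Theta> (\<lambda>j. q * indicator {0..1/q} j)"
      proof -
        have "{0..1/q} \<in> sets \<Theta>" unfolding \<Theta>_def using False q0
          by (subst sets_restrict_space_iff) (auto simp: field_simps)
        then show ?thesis by (intro integrable_mult_right integrable_indicator) (auto simp: P.emeasure_finite less_top[symmetric])
      qed
      fix j assume "j \<in> space \<Theta>"
      then have j: "0 \<le> j" "j \<le> 1" by (auto simp: sp)
      show "q * (if q \<le> g j then 1 else 0) \<le> q * indicator {0..1/q} j"
      proof (cases "q \<le> g j")
        case True
        then have "q * max (1/\<rho>) j \<le> 1" unfolding g_def using mpos[of j]
          by (simp add: pos_le_divide_eq mult.commute)
        then have "q * j \<le> 1" using q0 by (smt (verit) mult_left_mono max.cobounded2)
        then have "j \<le> 1/q" using q0 by (simp add: field_simps)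
        then show ?thesis using True j q0 by (simp add: indicator_def)
      qed (use q0 in \<open>auto simp: indicator_def\<close>)
    qed
    also have "\<dots> = q * measure \<Theta> {0..1/q}"
      using False by (simp add: sp)
    also have "measure \<Theta> {0..1/q} = 1/q"
      using False unfolding \<Theta>_def
      by (subst measure_restrict_space) (auto simp: measure_completion)
    finally show ?thesis using agg[of q] q0 by simp
  qed
  have fprof: "c_f_profit \<Theta> d f = 1" unfolding c_f_profit_def
    by (rule cSup_eq_maximum) (use agg1 aggle in auto)
  have hk: "(g has_integral (1 + ln \<rho>)) {0..1}"
  proof -
    have h1: "(g has_integral ((\<lambda>x. \<rho> * x) (1/\<rho>) - (\<lambda>x. \<rho> * x) 0)) {0..1/\<rho>}"
    proof (rule fundamental_theorem_of_calculus)
      show "0 \<le> 1/\<rho>" using r0 by simp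
      fix x assume x: "x \<in> {0..1/\<rho>}"
      have "max (1/\<rho>) x = 1/\<rho>" using x by simp
      then have "g x = \<rho>" unfolding g_def by simp
      then show "((\<lambda>x. \<rho> * x) has_vector_derivative g x) (at x within {0..1/\<rho>})"
        by (auto intro!: derivative_eq_intros)
    qed
    have h2: "(g has_integral (ln 1 - ln (1/\<rho>))) {1/\<rho>..1}"
    proof (rule fundamental_theorem_of_calculus)
      show "1/\<rho> \<le> 1" using r1 by simp
      fix x assume x: "x \<in> {1/\<rho>..1}"
      have xp: "0 < x" using x r0 by (auto intro: less_le_trans[of 0 "1/\<rho>"])
      have "max (1/\<rho>) x = x" using x by simp
      then have "g x = 1/x" unfolding g_def by simp
      moreover have "(ln has_real_derivative (1/x)) (at x within {1/\<rho>..1})"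
        using xp by (auto intro!: derivative_eq_intros simp: field_simps)
      ultimately show "(ln has_vector_derivative g x) (at x within {1/\<rho>..1})"
        by (simp add: has_real_derivative_iff_has_vector_derivative)
    qed
    have "(g has_integral (((\<lambda>x. \<rho> * x) (1/\<rho>) - (\<lambda>x. \<rho> * x) 0) + (ln 1 - ln (1/\<rho>)))) {0..1}"
      by (rule has_integral_combine[OF _ _ h1 h2]) (use r1 in auto)
    then show ?thesis using r0 by (simp add: ln_div)
  qed
  have pers: "c_pers_profit \<Theta> d = 1 + ln \<rho>"
  proof -
    have "c_pers_profit \<Theta> d = (\<integral>j. g j \<partial>\<Theta>)" unfolding c_pers_profit_def by (simp add: opt_fun)
    also have "\<dots> = integral {0..1} g"
      unfolding \<Theta>_def by (rule lebesgue_integral_eq_integral) (use int_g in \<open>auto simp: \<Theta>_def\<close>)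
    also have "\<dots> = 1 + ln \<rho>" using hk by (rule integral_unique)
    finally show ?thesis .
  qed
  show ?thesis
    apply (rule exI[where x=\<Theta>], rule exI[where x=d], rule exI[where x=pbar], rule exI[where x=f])
    using prob dn integ A0 A1 qmax qmin fprof pers by (simp add: f_def)
qed

theorem theorem1:
  shows "(\<forall>(\<theta> :: 'm::finite \<Rightarrow> real) (d :: 'n::finite \<Rightarrow> 'm \<Rightarrow> ('n \<Rightarrow> real) \<Rightarrow> real)
            (pbar :: 'm \<Rightarrow> 'n \<Rightarrow> real) (f :: 'n \<Rightarrow> real).
            (\<forall>j. 0 < \<theta> j) \<and> (\<Sum>j\<in>UNIV. \<theta> j) = 1 \<and> (\<forall>i. 0 < f i) \<and>
            demand_nonneg d \<and> A0 d pbar \<and> A1 \<theta> d pbar f \<longrightarrow>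
            pers_profit \<theta> d \<le> (1 + ln (qmax pbar f / qmin pbar f)) * f_profit \<theta> d f)
       \<and>
         (\<forall>\<rho>::real. 1 < \<rho> \<longrightarrow>
            (\<exists>(\<Theta> :: real measure) (d :: unit \<Rightarrow> real \<Rightarrow> (unit \<Rightarrow> real) \<Rightarrow> real)
               (pbar :: real \<Rightarrow> unit \<Rightarrow> real) (f :: unit \<Rightarrow> real).
               prob_space \<Theta> \<and> (\<forall>i. 0 < f i) \<and> c_demand_nonneg \<Theta> d \<and>
               c_integrable \<Theta> d pbar f \<and> c_A0 \<Theta> d pbar \<and> c_A1 \<Theta> d pbar f \<and>
               c_qmax \<Theta> pbar f / c_qmin \<Theta> pbar f = \<rho> \<and>
               0 < c_f_profit \<Theta> d f \<and>
               c_pers_profit \<Theta> d = (1 + ln \<rho>) * c_f_profit \<Theta> d f))"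
  using part1 part2 by blast

end
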